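(* (i) For any $k,l\ge1$, $v\in\mathfrak{H}y$, $w\in\mathfrak{H}^1$: $\gamma_\hbar^t(z_k)v\ast_+z_lw=\gamma_\hbar^t(z_k)(v\ast_+z_lw)+z_l\bigl(\gamma_\hbar^t(z_k)v\ast_+w\bigr)+(1-t)(z_k\circ_+z_l)(v\ast_+w)$. (ii) For any $k,l\ge1$, $v,w\in\mathfrak{H}^1$: $S_\hbar^t(z_kv)\ast_+z_lw=\gamma_\hbar^t(z_k)\bigl(S_\hbar^t(v)\ast_+z_lw\bigr)+z_l\bigl(S_\hbar^t(z_kv)\ast_+w\bigr)+(1-t)(z_k\circ_+z_l)\bigl(S_\hbar^t(v)\ast_+w\bigr)$. (iii) For any $k\ge0$, $l\ge1$, $v=z_pV$ with $p\ge1$, $V\in\mathfrak{H}^1$, and $w\in\mathfrak{H}y$: $x^kv\ast_+\gamma_\hbar^t(z_l)w=z_{k+p}\bigl(V\ast_+\gamma_\hbar^t(z_l)w\bigr)+\gamma_\hbar^t(z_l)(x^kv\ast_+w)+(1-t)(z_{k+p}\circ_+z_l)(V\ast_+w)$.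
   Context: Let $\hbar,t$ be formal variables and $\mathfrak{H}=\mathbb{Q}[\hbar,t]\langle x,y\rangle$ the noncommutative polynomial algebra over $\mathbb{Q}[\hbar,t]$; put $\mathfrak{H}^1=\mathbb{Q}[\hbar,t]+\mathfrak{H}y$ and $z_j=x^{j-1}y$ ($j\ge1$). Let $\mathfrak z$ be the $\mathbb{Q}[\hbar,t]$-span of $\{z_j\}$, with bilinear product $z_i\circ_+ z_j=z_{i+j}+\hbar z_{i+j-1}$, and for $a\in\mathfrak z$, $b\in\mathfrak{H}^1$ the product $ab$ denotes concatenation. Let $\gamma_\hbar^t$ be the algebra automorphism of $\mathfrak{H}$ with $\gamma_\hbar^t(x)=x$, $\gamma_\hbar^t(y)=tx+y+\hbar t$ (so $\gamma_\hbar^t(z_k)=x^{k-1}(tx+y+\hbar t)$). Let $S_\hbar^t:\mathfrak{H}^1\to\mathfrak{H}^1$ be the $\mathbb{Q}[\hbar,t]$-linear map with $S_\hbar^t(1)=1$ and $S_\hbar^t(z_kw)=z_kS_\hbar^t(w)+t\,z_k\circ_+S_\hbar^t(w)$ for words $w\in\mathfrak{H}^1$, where $\circ_+$ acts on $\mathfrak{H}^1$ via $z_i\circ_+1=0$, $z_i\circ_+(z_jw)=(z_i\circ_+z_j)w$. The product $\ast_+$ on $\mathfrak{H}^1$ is the $\mathbb{Q}[\hbar,t]$-bilinear product with $1\ast_+w=w\ast_+1=w$ and $z_iu\ast_+z_jv=z_i(u\ast_+z_jv)+z_j(z_iu\ast_+v)+(z_i\circ_+z_j)(u\ast_+v)$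 for $i,j\ge1$ and words $u,v,w$. *)

theory Defs
  imports "HOL-Library.Poly_Mapping" "HOL-Computational_Algebra.Polynomial"
begin

text \<open>Coefficients: Q[hbar,t] is rendered as rat poly poly; the outer variable is t,
  the inner variable (embedded as a constant polynomial) is hbar.\<close>
type_synonym R = "rat poly poly"

definition tt :: R where "tt = [:0, 1:]"
definition hb :: R where "hb = [:[:0, 1:]:]"

datatype letter = X | Y

text \<open>An element of the noncommutative polynomial algebra is a finitely supported
  function from words (lists of letters) to coefficients.\<close>
type_synonym H = "letter list \<Rightarrow>\<^sub>0 R"

definition wd :: "letter list \<Rightarrow> H" where "wd u = Poly_Mapping.single u 1"
definition sc :: "R \<Rightarrow> H" where "sc c = Poly_Mapping.single [] c"
definition hsmult :: "R \<Rightarrow> H \<Rightarrow> H" where "hsmult r p = Poly_Mapping.map (\<lambda>c. r * c) p"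

definition lin :: "(letter list \<Rightarrow> H) \<Rightarrow> H \<Rightarrow> H" where
  "lin f p = (\<Sum>u\<in>Poly_Mapping.keys p. hsmult (Poly_Mapping.lookup p u) (f u))"

definition cat :: "H \<Rightarrow> H \<Rightarrow> H" where
  "cat p q = lin (\<lambda>u. lin (\<lambda>v. wd (u @ v)) q) p"

definition xx :: H where "xx = wd [X]"
definition yy :: H where "yy = wd [Y]"
definition xpow :: "nat \<Rightarrow> H" where "xpow k = wd (replicate k X)"

definition z :: "nat \<Rightarrow> H" where "z j = wd (replicate (j - 1) X @ [Y])"

definition H1 :: "H set" where "H1 = {p. \<forall>u\<in>Poly_Mapping.keys p. u = [] \<or> last u = Y}"
definition Hy :: "H set" where "Hy = {p. \<forall>u\<in>Poly_Mapping.keys p. u \<noteq> [] \<and> last u = Y}"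

text \<open>Decomposition of a word z_i u' into (i, u').\<close>
definition zidx :: "letter list \<Rightarrow> nat" where
  "zidx u = length (takeWhile (\<lambda>c. c = X) u) + 1"
definition ztail :: "letter list \<Rightarrow> letter list" where
  "ztail u = drop (zidx u) u"

lemma ztail_shorter: "u \<noteq> [] \<Longrightarrow> length (ztail u) < length u"
  by (simp add: ztail_def zidx_def)

definition circz :: "nat \<Rightarrow> nat \<Rightarrow> H" where
  "circz i j = z (i + j) + hsmult hb (z (i + j - 1))"

definition circ :: "nat \<Rightarrow> H \<Rightarrow> H" where
  "circ i = lin (\<lambda>w. if w = [] \<or> Y \<notin> set w then 0
                      else cat (circz i (zidx w)) (wd (ztail w)))"

function qshw :: "letter list \<Rightarrow> letter list \<Rightarrow> H" where
  "qshw u v = (if u = [] then wd v else if v = [] then wd u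
     else if Y \<notin> set u \<or> Y \<notin> set v then 0
     else cat (z (zidx u)) (qshw (ztail u) v)
        + cat (z (zidx v)) (qshw u (ztail v))
        + cat (circz (zidx u) (zidx v)) (qshw (ztail u) (ztail v)))"
  by pat_completeness auto
termination
  by (relation "measure (\<lambda>(u, v). length u + length v)")
     (auto dest!: ztail_shorter simp: add_less_mono)

definition qsh :: "H \<Rightarrow> H \<Rightarrow> H" where
  "qsh p q = lin (\<lambda>u. lin (\<lambda>v. qshw u v) q) p"

fun gw :: "letter list \<Rightarrow> H" where
  "gw [] = wd []"
| "gw (X # u) = cat xx (gw u)"
| "gw (Y # u) = cat (hsmult tt xx + yy + sc (hb * tt)) (gw u)"

definition gamma :: "H \<Rightarrow> H" where "gamma = lin gw"

function Sw :: "letter list \<Rightarrow> H" where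
  "Sw u = (if u = [] then wd [] else if Y \<notin> set u then 0
     else cat (z (zidx u)) (Sw (ztail u)) + hsmult tt (circ (zidx u) (Sw (ztail u))))"
  by pat_completeness auto
termination
  by (relation "measure length") (auto dest: ztail_shorter)

definition S :: "H \<Rightarrow> H" where "S = lin Sw"

end

theory Submission
  imports Defs
begin

instantiation list :: (type) monoid_add
begin
definition zero_list :: "'a list" where "zero_list = []"
definition plus_list :: "'a list \<Rightarrow> 'a list \<Rightarrow> 'a list" where "plus_list a b = a @ b"
instance by standard (auto simp: zero_list_def plus_list_def)
end

declare qshw.simps[simp del] Sw.simps[simp del]

lemma zero_list_eq[simp]: "(0::'a list) = []" by (simp add: zero_list_def)
lemma plus_list_eq[simp]: "(a::'a list) + b = a @ b" by (simp add: plus_list_def)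

lemma wd_mult: "wd a * wd b = wd (a @ b)"
  by (simp add: wd_def mult_single)

lemma wd_Nil[simp]: "wd [] = 1"
  by (simp add: wd_def flip: zero_list_eq)

lemma single_mult_single: "Poly_Mapping.single a c * Poly_Mapping.single b d = Poly_Mapping.single (a @ b) (c * d)"
  by (simp add: mult_single)

lemma hsmult_eq: "hsmult r p = Poly_Mapping.single [] r * p"
proof -
  have "hsmult r p = Poly_Mapping.map ((*) r) p" by (simp add: hsmult_def)
  also have "\<dots> = Poly_Mapping.single 0 r * p" by (rule mult_map_scale_conv_mult)
  finally show ?thesis by simp
qed

lemma lookup_hsmult: "Poly_Mapping.lookup (hsmult r p) u = r * Poly_Mapping.lookup p u"
  by (simp add: hsmult_def Poly_Mapping.map.rep_eq when_def)

lemma central: "Poly_Mapping.single [] c * (a::H) = a * Poly_Mapping.single [] c"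
proof (rule poly_mapping_eqI)
  fix k
  have "Poly_Mapping.lookup (Poly_Mapping.single [] c * a) k = c * Poly_Mapping.lookup a k"
    by (metis hsmult_eq lookup_hsmult)
  moreover have "Poly_Mapping.lookup (a * Poly_Mapping.single [] c) k = Poly_Mapping.lookup a k * c"
  proof -
    have inner: "Sum_any (\<lambda>q. Poly_Mapping.lookup (Poly_Mapping.single [] c) q when k = l @ q) = (c when k = l)" for l
    proof -
      have e: "(\<lambda>q. Poly_Mapping.lookup (Poly_Mapping.single [] c) q when k = l @ q) = (\<lambda>q. (c when k = l) when q = [])"
        by (auto simp: lookup_single when_def fun_eq_iff)
      show ?thesis unfolding e by (simp add: when_def)
    qed
    have "Poly_Mapping.lookup (a * Poly_Mapping.single [] c) k
        = Sum_any (\<lambda>l. Poly_Mapping.lookup a l * Sum_any (\<lambda>q. Poly_Mapping.lookup (Poly_Mapping.single [] c) q when k = l @ q))"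
      by (simp add: lookup_mult)
    also have "\<dots> = Sum_any (\<lambda>l. (Poly_Mapping.lookup a l * c) when k = l)"
      by (simp only: inner mult_when)
    also have "\<dots> = Poly_Mapping.lookup a k * c"
      by (simp add: when_def)
    finally show ?thesis .
  qed
  ultimately show "Poly_Mapping.lookup (Poly_Mapping.single [] c * a) k = Poly_Mapping.lookup (a * Poly_Mapping.single [] c) k"
    by (simp add: mult.commute)
qed

lemma hsmult_add_right[simp]: "hsmult r (p + q) = hsmult r p + hsmult r q"
  by (simp add: hsmult_eq distrib_left)
lemma hsmult_add_left[simp]: "hsmult (r + s) p = hsmult r p + hsmult s p"
  by (simp add: hsmult_eq single_add distrib_right)
lemma hsmult_diff_left[simp]: "hsmult (r - s) p = hsmult r p - hsmult s p"
  by (simp add: hsmult_eq single_diff left_diff_distrib)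
lemma hsmult_diff_right[simp]: "hsmult r (p - q) = hsmult r p - hsmult r q"
  by (simp add: hsmult_eq right_diff_distrib)
lemma hsmult_uminus_right[simp]: "hsmult r (- p) = - hsmult r p"
  by (simp add: hsmult_eq)
lemma hsmult_hsmult[simp]: "hsmult r (hsmult s p) = hsmult (r * s) p"
  by (simp add: hsmult_eq mult.assoc[symmetric] single_mult_single)
lemma hsmult_one[simp]: "hsmult 1 p = p"
  by (simp add: hsmult_eq flip: zero_list_eq)
lemma hsmult_zero_left[simp]: "hsmult 0 p = 0"
  by (simp add: hsmult_eq)
lemma hsmult_zero_right[simp]: "hsmult r 0 = 0"
  by (simp add: hsmult_eq)
lemma hsmult_mult_left[simp]: "hsmult r p * q = hsmult r (p * q)"
  by (simp add: hsmult_eq mult.assoc)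
lemma hsmult_mult_right[simp]: "p * hsmult r q = hsmult r (p * q)"
proof -
  have "p * (Poly_Mapping.single [] r * q) = (p * Poly_Mapping.single [] r) * q" by (simp add: mult.assoc)
  also have "\<dots> = (Poly_Mapping.single [] r * p) * q" by (simp add: central)
  finally show ?thesis by (simp add: hsmult_eq mult.assoc)
qed

lemma hsmult_single: "hsmult r (Poly_Mapping.single u c) = Poly_Mapping.single u (r * c)"
  by (simp add: hsmult_def)

lemma hsmult_wd: "hsmult c (wd u) = Poly_Mapping.single u c"
  by (simp add: wd_def hsmult_single)


lemma hsmult_comm: "hsmult c (hsmult d p) = hsmult d (hsmult c p)"
  by (simp add: mult.commute)

lemma hsmult_sum: "hsmult c (sum g A) = (\<Sum>i\<in>A. hsmult c (g i))"
  by (simp add: hsmult_eq sum_distrib_left)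

lemma keys_hsmult: "Poly_Mapping.keys (hsmult c p) \<subseteq> Poly_Mapping.keys p"
  by (auto simp: in_keys_iff lookup_hsmult)

lemma lin_zero[simp]: "lin f 0 = 0" by (simp add: lin_def)

lemma lin_single: "lin f (Poly_Mapping.single u c) = hsmult c (f u)"
  by (cases "c = 0") (simp_all add: lin_def)

lemma lin_wd[simp]: "lin f (wd u) = f u"
  by (simp add: wd_def lin_single)

lemma lin_ext:
  assumes "finite K" "Poly_Mapping.keys p \<subseteq> K"
  shows "lin f p = (\<Sum>u\<in>K. hsmult (Poly_Mapping.lookup p u) (f u))"
  unfolding lin_def
  by (rule sum.mono_neutral_left) (use assms in \<open>auto simp: in_keys_iff\<close>)

lemma lin_add: "lin f (p + q) = lin f p + lin f q"
proof -
  let ?K = "Poly_Mapping.keys p \<union> Poly_Mapping.keys q"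
  have fin: "finite ?K" by simp
  have "lin f (p + q) = (\<Sum>u\<in>?K. hsmult (Poly_Mapping.lookup (p + q) u) (f u))"
    by (rule lin_ext[OF fin]) (rule keys_add)
  also have "\<dots> = (\<Sum>u\<in>?K. hsmult (Poly_Mapping.lookup p u) (f u)) + (\<Sum>u\<in>?K. hsmult (Poly_Mapping.lookup q u) (f u))"
    by (simp add: lookup_add sum.distrib)
  also have "\<dots> = lin f p + lin f q"
    by (simp add: lin_ext[OF fin])
  finally show ?thesis .
qed

lemma lin_hsmult: "lin f (hsmult c p) = hsmult c (lin f p)"
proof -
  have "lin f (hsmult c p) = (\<Sum>u\<in>Poly_Mapping.keys p. hsmult (Poly_Mapping.lookup (hsmult c p) u) (f u))"
    by (rule lin_ext) (simp_all add: keys_hsmult)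
  also have "\<dots> = hsmult c (lin f p)"
    by (simp add: lin_def hsmult_sum lookup_hsmult)
  finally show ?thesis .
qed

lemma lin_cong: "(\<And>u. u \<in> Poly_Mapping.keys p \<Longrightarrow> f u = g u) \<Longrightarrow> lin f p = lin g p"
  by (simp add: lin_def)

lemma lin_fun_add: "lin (\<lambda>u. f u + g u) p = lin f p + lin g p"
  by (simp add: lin_def sum.distrib)

lemma lin_fun_hsmult: "lin (\<lambda>u. hsmult c (f u)) p = hsmult c (lin f p)"
  by (simp add: lin_def hsmult_sum mult.commute)

lemma lin_expand: "lin wd p = p"
proof (rule poly_mapping_eqI)
  fix k
  have "Poly_Mapping.lookup (lin wd p) k = (\<Sum>u\<in>Poly_Mapping.keys p. (Poly_Mapping.lookup p u when u = k))"
    by (simp add: lin_def hsmult_wd lookup_sum lookup_single)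
  also have "\<dots> = Poly_Mapping.lookup p k"
    by (simp add: when_def in_keys_iff)
  finally show "Poly_Mapping.lookup (lin wd p) k = Poly_Mapping.lookup p k" .
qed

definition lin_op :: "(H \<Rightarrow> H) \<Rightarrow> bool" where
  "lin_op F \<longleftrightarrow> (\<forall>p q. F (p + q) = F p + F q) \<and> (\<forall>c p. F (hsmult c p) = hsmult c (F p))"

lemma lin_op_zero: assumes a: "lin_op F" shows "F 0 = 0"
proof -
  have "F (hsmult 0 0) = hsmult 0 (F 0)" using a unfolding lin_op_def by blast
  thus ?thesis by simp
qed

lemma lin_op_sum:
  assumes F: "lin_op F" shows "F (sum g A) = (\<Sum>i\<in>A. F (g i))"
proof (induction A rule: infinite_finite_induct)
  case (infinite A) thus ?case using lin_op_zero[OF F] by simp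
next
  case empty thus ?case using lin_op_zero[OF F] by simp
next
  case (insert x A) thus ?case using F by (simp add: lin_op_def)
qed

lemma lin_op_eq_lin: "lin_op F \<Longrightarrow> F p = lin (\<lambda>u. F (wd u)) p"
proof -
  assume F: "lin_op F"
  have "F p = F (lin wd p)" by (simp add: lin_expand)
  also have "\<dots> = lin (\<lambda>u. F (wd u)) p"
    unfolding lin_def using F by (simp add: lin_op_sum) (simp add: lin_op_def)
  finally show ?thesis .
qed

lemma lin_op_unique:
  assumes "lin_op F" "lin_op G" "\<And>u. u \<in> Poly_Mapping.keys p \<Longrightarrow> F (wd u) = G (wd u)"
  shows "F p = G p"
proof -
  have "F p = lin (\<lambda>u. F (wd u)) p" by (rule lin_op_eq_lin) fact
  also have "\<dots> = lin (\<lambda>u. G (wd u)) p" by (rule lin_cong) (rule assms(3))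
  also have "\<dots> = G p" by (rule lin_op_eq_lin[symmetric]) fact
  finally show ?thesis .
qed

lemma lin_op_id: "lin_op (\<lambda>x. x)" by (simp add: lin_op_def)
lemma lin_op_add: "lin_op F \<Longrightarrow> lin_op G \<Longrightarrow> lin_op (\<lambda>x. F x + G x)"
  by (simp add: lin_op_def)
lemma lin_op_hsm: "lin_op F \<Longrightarrow> lin_op (\<lambda>x. hsmult c (F x))"
  by (simp add: lin_op_def mult.commute)
lemma lin_op_ml: "lin_op F \<Longrightarrow> lin_op (\<lambda>x. a * F x)"
  by (simp add: lin_op_def distrib_left)
lemma lin_op_mr: "lin_op F \<Longrightarrow> lin_op (\<lambda>x. F x * a)"
  by (simp add: lin_op_def distrib_right)
lemma lin_op_lin: "lin_op F \<Longrightarrow> lin_op (\<lambda>x. lin f (F x))"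
  by (simp add: lin_op_def lin_add lin_hsmult)
lemma lin_op_lin2: "lin_op F \<Longrightarrow> lin_op (\<lambda>x. lin (\<lambda>u. lin (g u) (F x)) p)"
  by (simp add: lin_op_def lin_add lin_hsmult lin_fun_add lin_fun_hsmult)

lemma cat_eq[simp]: "cat p q = p * q"
proof -
  have 1: "lin (\<lambda>v. wd (u @ v)) q = wd u * q" for u
    using lin_op_eq_lin[OF lin_op_ml[OF lin_op_id, where a="wd u"], where p=q] by (simp add: wd_mult)
  have "cat p q = lin (\<lambda>u. wd u * q) p" by (simp add: cat_def 1)
  also have "\<dots> = p * q"
    using lin_op_eq_lin[OF lin_op_mr[OF lin_op_id, where a=q], where p=p] by simp
  finally show ?thesis .
qed

lemma lin_op_qsh1: "lin_op F \<Longrightarrow> lin_op (\<lambda>x. qsh (F x) q)"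
  unfolding qsh_def by (rule lin_op_lin)
lemma lin_op_qsh2: "lin_op F \<Longrightarrow> lin_op (\<lambda>x. qsh p (F x))"
  unfolding qsh_def by (rule lin_op_lin2)
lemma lin_op_S: "lin_op F \<Longrightarrow> lin_op (\<lambda>x. S (F x))"
  unfolding S_def by (rule lin_op_lin)
lemma lin_op_circ: "lin_op F \<Longrightarrow> lin_op (\<lambda>x. circ i (F x))"
  unfolding circ_def by (rule lin_op_lin)

lemmas lin_op_intros = lin_op_id lin_op_add lin_op_hsm lin_op_ml lin_op_mr lin_op_qsh1 lin_op_qsh2 lin_op_S lin_op_circ

lemma qsh_add_left[simp]: "qsh (p1 + p2) q = qsh p1 q + qsh p2 q"
  using lin_op_qsh1[OF lin_op_id, of q] by (simp add: lin_op_def)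
lemma qsh_add_right[simp]: "qsh p (q1 + q2) = qsh p q1 + qsh p q2"
  using lin_op_qsh2[OF lin_op_id, of p] by (simp add: lin_op_def)
lemma qsh_hsmult_left[simp]: "qsh (hsmult c p) q = hsmult c (qsh p q)"
  using lin_op_qsh1[OF lin_op_id, of q] by (simp add: lin_op_def)
lemma qsh_hsmult_right[simp]: "qsh p (hsmult c q) = hsmult c (qsh p q)"
  using lin_op_qsh2[OF lin_op_id, of p] by (simp add: lin_op_def)
lemma qsh_zero_left[simp]: "qsh 0 q = 0"
  using lin_op_zero[OF lin_op_qsh1[OF lin_op_id, of q]] by simp
lemma qsh_zero_right[simp]: "qsh p 0 = 0"
  using lin_op_zero[OF lin_op_qsh2[OF lin_op_id, of p]] by simp

lemma qsh_wd: "qsh (wd u) (wd v) = qshw u v"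
  by (simp add: qsh_def)

lemma qshw_Nil_left: "qshw [] v = wd v"
  by (subst qshw.simps) simp
lemma qshw_Nil_right: "qshw u [] = wd u"
  by (subst qshw.simps) simp

lemma qsh_one_left[simp]: "qsh 1 q = q"
proof -
  have "qsh 1 q = qsh (wd []) q" by simp
  also have "\<dots> = lin (\<lambda>v. qshw [] v) q" by (simp only: qsh_def lin_wd)
  also have "\<dots> = lin wd q" by (simp only: qshw_Nil_left)
  finally show ?thesis by (simp add: lin_expand)
qed

lemma qsh_one_right[simp]: "qsh p 1 = p"
proof -
  have "qsh p 1 = qsh p (wd [])" by simp
  also have "\<dots> = lin (\<lambda>u. qshw u []) p" by (simp only: qsh_def lin_wd)
  also have "\<dots> = lin wd p" by (simp only: qshw_Nil_right)
  finally show ?thesis by (simp add: lin_expand)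
qed


lemma z_Suc: "z (Suc n) = wd (replicate n X @ [Y])" by (simp add: z_def)

lemma z_mult_wd: "z (Suc n) * wd A = wd (replicate n X @ Y # A)"
  by (simp add: z_Suc wd_mult)

lemma xpow_z: "xpow n * z (Suc p) = z (Suc (n + p))"
  by (simp add: xpow_def z_Suc wd_mult replicate_add)

lemma xpow_z_assoc: "xpow n * (z (Suc p) * P) = z (Suc (n + p)) * P"
  by (simp add: mult.assoc[symmetric] xpow_z)

lemma xpow_X: "xpow k * wd [X] = xpow (Suc k)"
  by (simp add: xpow_def wd_mult replicate_append_same)

lemma xpow_Y: "xpow k * wd [Y] = z (Suc k)"
  by (simp add: xpow_def wd_mult z_Suc)

lemma zidx_rep: "zidx (replicate n X @ Y # A) = Suc n"
proof -
  have "takeWhile (\<lambda>c. c = X) (replicate n X @ Y # A) = replicate n X"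
    by (subst takeWhile_append2) auto
  thus ?thesis by (simp add: zidx_def)
qed

lemma ztail_rep: "ztail (replicate n X @ Y # A) = A"
  by (simp add: ztail_def zidx_rep)

lemma word_decomp: "Y \<in> set u \<Longrightarrow> \<exists>n A. u = replicate n X @ Y # A"
proof (induction u)
  case Nil then show ?case by simp
next
  case (Cons c u)
  show ?case
  proof (cases c)
    case X
    with Cons.prems have "Y \<in> set u" by auto
    with Cons.IH obtain n A where "u = replicate n X @ Y # A" by blast
    with X show ?thesis by (intro exI[of _ "Suc n"] exI[of _ A]) simp
  next
    case Y thus ?thesis by (intro exI[of _ 0] exI[of _ u]) simp
  qed
qed

lemma wd_decomp: "Y \<in> set u \<Longrightarrow> \<exists>n A. wd u = z (Suc n) * wd A"
  using word_decomp[of u] by (auto simp: z_mult_wd)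

lemma circz_Suc: "circz (Suc a) (Suc b) = z (Suc (Suc (a + b))) + hsmult hb (z (Suc (a + b)))"
  by (simp add: circz_def)

lemma qsh_zz_wd:
  "qsh (z (Suc i) * wd A) (z (Suc j) * wd B)
   = z (Suc i) * qsh (wd A) (z (Suc j) * wd B) + z (Suc j) * qsh (z (Suc i) * wd A) (wd B)
     + circz (Suc i) (Suc j) * qsh (wd A) (wd B)"
proof -
  let ?a = "replicate i X @ Y # A" and ?b = "replicate j X @ Y # B"
  have "qsh (z (Suc i) * wd A) (z (Suc j) * wd B) = qshw ?a ?b" by (simp add: z_mult_wd qsh_wd)
  also have "\<dots> = z (Suc i) * qshw A ?b + z (Suc j) * qshw ?a B + circz (Suc i) (Suc j) * qshw A B"
    by (subst qshw.simps) (simp add: zidx_rep ztail_rep)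
  also have "\<dots> = z (Suc i) * qsh (wd A) (z (Suc j) * wd B) + z (Suc j) * qsh (z (Suc i) * wd A) (wd B)
     + circz (Suc i) (Suc j) * qsh (wd A) (wd B)"
    by (simp add: z_mult_wd qsh_wd)
  finally show ?thesis .
qed

lemma Q_gen:
  "qsh (z (Suc i) * P) (z (Suc j) * Q)
   = z (Suc i) * qsh P (z (Suc j) * Q) + z (Suc j) * qsh (z (Suc i) * P) Q
     + circz (Suc i) (Suc j) * qsh P Q"
proof -
  have step: "qsh (z (Suc i) * wd A) (z (Suc j) * Q)
     = z (Suc i) * qsh (wd A) (z (Suc j) * Q) + z (Suc j) * qsh (z (Suc i) * wd A) Q
       + circz (Suc i) (Suc j) * qsh (wd A) Q" for A
    apply (rule lin_op_unique[of "\<lambda>Q. qsh (z (Suc i) * wd A) (z (Suc j) * Q)"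
      "\<lambda>Q. z (Suc i) * qsh (wd A) (z (Suc j) * Q) + z (Suc j) * qsh (z (Suc i) * wd A) Q
       + circz (Suc i) (Suc j) * qsh (wd A) Q"])
      apply (intro lin_op_intros)
     apply (intro lin_op_intros)
    apply (rule qsh_zz_wd)
    done
  show ?thesis
    apply (rule lin_op_unique[of "\<lambda>P. qsh (z (Suc i) * P) (z (Suc j) * Q)"
      "\<lambda>P. z (Suc i) * qsh P (z (Suc j) * Q) + z (Suc j) * qsh (z (Suc i) * P) Q
       + circz (Suc i) (Suc j) * qsh P Q"])
      apply (intro lin_op_intros)
     apply (intro lin_op_intros)
    apply (rule step)
    done
qed

lemma Q_gen1:
  "qsh (z (Suc i)) (z (Suc j) * Q)
   = z (Suc i) * (z (Suc j) * Q) + z (Suc j) * qsh (z (Suc i)) Q + circz (Suc i) (Suc j) * Q"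
  using Q_gen[of i 1 j Q] by simp

lemma gw_rep: "gw (replicate n X @ u) = xpow n * gw u"
  by (induction n) (simp_all add: xx_def xpow_def wd_mult mult.assoc[symmetric])

lemma sc_eq: "sc c = hsmult c 1"
  by (simp add: sc_def hsmult_eq)

lemma gamma_z: "gamma (z (Suc k)) = hsmult tt (xpow (Suc k)) + z (Suc k) + hsmult (hb * tt) (xpow k)"
proof -
  have "gamma (z (Suc k)) = gw (replicate k X @ [Y])" by (simp add: gamma_def z_Suc)
  also have "\<dots> = xpow k * gw [Y]" by (rule gw_rep)
  also have "gw [Y] = hsmult tt (wd [X]) + wd [Y] + hsmult (hb * tt) 1"
    by (simp add: xx_def yy_def sc_eq)
  finally show ?thesis by (simp add: distrib_left xpow_X xpow_Y)
qed

lemma circ_z: "circ i (z (Suc p) * Q) = circz i (Suc p) * Q"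
proof -
  have w: "circ i (z (Suc p) * wd u) = circz i (Suc p) * wd u" for u
    by (simp add: circ_def z_mult_wd zidx_rep ztail_rep)
  show ?thesis
    apply (rule lin_op_unique[of "\<lambda>Q. circ i (z (Suc p) * Q)" "\<lambda>Q. circz i (Suc p) * Q"])
      apply (intro lin_op_intros)
     apply (intro lin_op_intros)
    apply (rule w)
    done
qed

lemma circ_one: "circ i 1 = 0"
proof -
  have "circ i (wd []) = 0" by (simp only: circ_def lin_wd) simp
  thus ?thesis by simp
qed

lemma S_z: "S (z (Suc k) * Q) = z (Suc k) * S Q + hsmult tt (circ (Suc k) (S Q))"
proof -
  have w: "S (z (Suc k) * wd u) = z (Suc k) * S (wd u) + hsmult tt (circ (Suc k) (S (wd u)))" for u
  proof -
    have "S (z (Suc k) * wd u) = Sw (replicate k X @ Y # u)" by (simp add: S_def z_mult_wd)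
    also have "\<dots> = z (Suc k) * Sw u + hsmult tt (circ (Suc k) (Sw u))"
      by (subst Sw.simps) (simp add: zidx_rep ztail_rep)
    also have "Sw u = S (wd u)" by (simp add: S_def)
    finally show ?thesis .
  qed
  show ?thesis
    apply (rule lin_op_unique[of "\<lambda>Q. S (z (Suc k) * Q)" "\<lambda>Q. z (Suc k) * S Q + hsmult tt (circ (Suc k) (S Q))"])
      apply (intro lin_op_intros)
     apply (intro lin_op_intros)
    apply (rule w)
    done
qed

definition goodp :: "H \<Rightarrow> bool" where
  "goodp p \<longleftrightarrow> (\<forall>u\<in>Poly_Mapping.keys p. u = [] \<or> Y \<in> set u)"

lemma goodp_zero: "goodp 0" by (simp add: goodp_def)
lemma goodp_one: "goodp 1"
proof -
  have "Poly_Mapping.keys (1::H) = {[]}" by (metis wd_Nil wd_def keys_single one_neq_zero)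
  thus ?thesis by (simp add: goodp_def)
qed
lemma goodp_add: "goodp p \<Longrightarrow> goodp q \<Longrightarrow> goodp (p + q)"
  unfolding goodp_def using keys_add[of p q] by blast
lemma goodp_hsmult: "goodp p \<Longrightarrow> goodp (hsmult c p)"
  unfolding goodp_def using keys_hsmult[of c p] by blast
lemma goodp_sum: "(\<And>i. i \<in> A \<Longrightarrow> goodp (g i)) \<Longrightarrow> goodp (sum g A)"
  by (induction A rule: infinite_finite_induct) (auto simp: goodp_zero goodp_add)
lemma goodp_lin: "(\<And>u. goodp (f u)) \<Longrightarrow> goodp (lin f p)"
  unfolding lin_def by (intro goodp_sum goodp_hsmult) auto
lemma goodp_zmult: "goodp (z i * P)"
  unfolding goodp_def
proof
  fix u assume "u \<in> Poly_Mapping.keys (z i * P)"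
  then obtain a b where ab: "a \<in> Poly_Mapping.keys (z i)" "u = a + b" using keys_mult[of "z i" P] by blast
  from ab(1) have "a = replicate (i - 1) X @ [Y]" by (simp add: z_def wd_def)
  with ab(2) show "u = [] \<or> Y \<in> set u" by simp
qed
lemma goodp_circz: "goodp (circz i j * P)"
  by (simp add: circz_def distrib_right goodp_add goodp_hsmult goodp_zmult)
lemma goodp_circ: "goodp (circ i P)"
  unfolding circ_def by (rule goodp_lin) (simp add: goodp_zero goodp_circz)
lemma goodp_Sw: "goodp (Sw u)"
  by (subst Sw.simps) (simp add: goodp_zero goodp_one goodp_add goodp_hsmult goodp_zmult goodp_circ)
lemma goodp_S: "goodp (S v)"
  unfolding S_def by (rule goodp_lin) (rule goodp_Sw)


lemma part1_z:
  "qsh (gamma (z (Suc k)) * (z (Suc p) * P)) (z (Suc l) * Q)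
   = gamma (z (Suc k)) * qsh (z (Suc p) * P) (z (Suc l) * Q)
   + z (Suc l) * qsh (gamma (z (Suc k)) * (z (Suc p) * P)) Q
   + hsmult (1 - tt) (circz (Suc k) (Suc l) * qsh (z (Suc p) * P) Q)"
  by (simp add: gamma_z Q_gen circz_Suc xpow_z_assoc algebra_simps)

lemma part3_z:
  "qsh (z (Suc a) * V) (gamma (z (Suc l)) * (z (Suc q) * Q))
   = z (Suc a) * qsh V (gamma (z (Suc l)) * (z (Suc q) * Q))
   + gamma (z (Suc l)) * qsh (z (Suc a) * V) (z (Suc q) * Q)
   + hsmult (1 - tt) (circz (Suc a) (Suc l) * qsh V (z (Suc q) * Q))"
  by (simp add: gamma_z Q_gen circz_Suc xpow_z_assoc algebra_simps)


lemma part2_one: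
  "qsh (z (Suc k) * 1 + hsmult tt (circ (Suc k) 1)) (z (Suc l) * Q)
   = gamma (z (Suc k)) * qsh 1 (z (Suc l) * Q)
   + z (Suc l) * qsh (z (Suc k) * 1 + hsmult tt (circ (Suc k) 1)) Q
   + hsmult (1 - tt) (circz (Suc k) (Suc l) * qsh 1 Q)"
  by (simp add: circ_one Q_gen1 gamma_z circz_Suc xpow_z_assoc algebra_simps)

lemma part2_gen:
  assumes g: "goodp s"
  shows "qsh (z (Suc k) * s + hsmult tt (circ (Suc k) s)) (z (Suc l) * Q)
   = gamma (z (Suc k)) * qsh s (z (Suc l) * Q)
   + z (Suc l) * qsh (z (Suc k) * s + hsmult tt (circ (Suc k) s)) Q
   + hsmult (1 - tt) (circz (Suc k) (Suc l) * qsh s Q)"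
proof (rule lin_op_unique[of "\<lambda>s. qsh (z (Suc k) * s + hsmult tt (circ (Suc k) s)) (z (Suc l) * Q)"
   "\<lambda>s. gamma (z (Suc k)) * qsh s (z (Suc l) * Q)
   + z (Suc l) * qsh (z (Suc k) * s + hsmult tt (circ (Suc k) s)) Q
   + hsmult (1 - tt) (circz (Suc k) (Suc l) * qsh s Q)"])
  show "lin_op (\<lambda>s. qsh (z (Suc k) * s + hsmult tt (circ (Suc k) s)) (z (Suc l) * Q))"
    by (intro lin_op_intros)
  show "lin_op (\<lambda>s. gamma (z (Suc k)) * qsh s (z (Suc l) * Q)
   + z (Suc l) * qsh (z (Suc k) * s + hsmult tt (circ (Suc k) s)) Q
   + hsmult (1 - tt) (circz (Suc k) (Suc l) * qsh s Q))"
    by (intro lin_op_intros)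
  fix u assume u: "u \<in> Poly_Mapping.keys s"
  with g have "u = [] \<or> Y \<in> set u" by (auto simp: goodp_def)
  then show "qsh (z (Suc k) * wd u + hsmult tt (circ (Suc k) (wd u))) (z (Suc l) * Q)
   = gamma (z (Suc k)) * qsh (wd u) (z (Suc l) * Q)
   + z (Suc l) * qsh (z (Suc k) * wd u + hsmult tt (circ (Suc k) (wd u))) Q
   + hsmult (1 - tt) (circz (Suc k) (Suc l) * qsh (wd u) Q)"
  proof
    assume "u = []"
    then show ?thesis using part2_one[of k l Q] by simp
  next
    assume "Y \<in> set u"
    then obtain n A where nA: "wd u = z (Suc n) * wd A" using wd_decomp by blast
    have eq: "z (Suc k) * (z (Suc n) * wd A) + hsmult tt (circ (Suc k) (z (Suc n) * wd A))
        = gamma (z (Suc k)) * (z (Suc n) * wd A)"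
      by (simp add: circ_z gamma_z circz_Suc xpow_z_assoc algebra_simps)
    show ?thesis unfolding nA eq by (rule part1_z)
  qed
qed

lemma part1:
  assumes "1 \<le> k" "1 \<le> l" "v \<in> Hy"
  shows "qsh (cat (gamma (z k)) v) (cat (z l) w)
          = cat (gamma (z k)) (qsh v (cat (z l) w))
            + cat (z l) (qsh (cat (gamma (z k)) v) w)
            + hsmult (1 - tt) (cat (circz k l) (qsh v w))"
proof -
  obtain k' l' where kl: "k = Suc k'" "l = Suc l'" using assms(1,2) by (metis Suc_pred' less_eq_Suc_le One_nat_def)
  show ?thesis unfolding cat_eq kl
  proof (rule lin_op_unique[of "\<lambda>v. qsh (gamma (z (Suc k')) * v) (z (Suc l') * w)"
     "\<lambda>v. gamma (z (Suc k')) * qsh v (z (Suc l') * w) + z (Suc l') * qsh (gamma (z (Suc k')) * v) w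
        + hsmult (1 - tt) (circz (Suc k') (Suc l') * qsh v w)"])
    show "lin_op (\<lambda>v. qsh (gamma (z (Suc k')) * v) (z (Suc l') * w))" by (intro lin_op_intros)
    show "lin_op (\<lambda>v. gamma (z (Suc k')) * qsh v (z (Suc l') * w) + z (Suc l') * qsh (gamma (z (Suc k')) * v) w
        + hsmult (1 - tt) (circz (Suc k') (Suc l') * qsh v w))" by (intro lin_op_intros)
    fix u assume "u \<in> Poly_Mapping.keys v"
    with assms(3) have "u \<noteq> [] \<and> last u = Y" by (auto simp: Hy_def)
    then have "Y \<in> set u" by (metis last_in_set)
    then obtain n A where nA: "wd u = z (Suc n) * wd A" using wd_decomp by blast
    show "qsh (gamma (z (Suc k')) * wd u) (z (Suc l') * w) =
          gamma (z (Suc k')) * qsh (wd u) (z (Suc l') * w) + z (Suc l') * qsh (gamma (z (Suc k')) * wd u) w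
        + hsmult (1 - tt) (circz (Suc k') (Suc l') * qsh (wd u) w)"
      unfolding nA by (rule part1_z)
  qed
qed

lemma part2:
  assumes "1 \<le> k" "1 \<le> l"
  shows "qsh (S (cat (z k) v)) (cat (z l) w)
          = cat (gamma (z k)) (qsh (S v) (cat (z l) w))
            + cat (z l) (qsh (S (cat (z k) v)) w)
            + hsmult (1 - tt) (cat (circz k l) (qsh (S v) w))"
proof -
  obtain k' l' where kl: "k = Suc k'" "l = Suc l'" using assms(1,2) by (metis Suc_pred' less_eq_Suc_le One_nat_def)
  show ?thesis unfolding cat_eq kl S_z
    by (rule part2_gen[OF goodp_S])
qed

lemma part3:
  assumes "1 \<le> l" "1 \<le> p" "v = cat (z p) V" "w \<in> Hy"
  shows "qsh (cat (xpow k) v) (cat (gamma (z l)) w)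
          = cat (z (k + p)) (qsh V (cat (gamma (z l)) w))
            + cat (gamma (z l)) (qsh (cat (xpow k) v) w)
            + hsmult (1 - tt) (cat (circz (k + p) l) (qsh V w))"
proof -
  obtain p' l' where kl: "p = Suc p'" "l = Suc l'" using assms(1,2) by (metis Suc_pred' less_eq_Suc_le One_nat_def)
  have xv: "xpow k * v = z (Suc (k + p')) * V" using assms(3) kl by (simp add: xpow_z_assoc)
  have kp: "k + p = Suc (k + p')" using kl by simp
  show ?thesis unfolding cat_eq xv kp kl(2)
  proof (rule lin_op_unique[of "\<lambda>w. qsh (z (Suc (k + p')) * V) (gamma (z (Suc l')) * w)"
     "\<lambda>w. z (Suc (k + p')) * qsh V (gamma (z (Suc l')) * w) + gamma (z (Suc l')) * qsh (z (Suc (k + p')) * V) w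
        + hsmult (1 - tt) (circz (Suc (k + p')) (Suc l') * qsh V w)"])
    show "lin_op (\<lambda>w. qsh (z (Suc (k + p')) * V) (gamma (z (Suc l')) * w))" by (intro lin_op_intros)
    show "lin_op (\<lambda>w. z (Suc (k + p')) * qsh V (gamma (z (Suc l')) * w) + gamma (z (Suc l')) * qsh (z (Suc (k + p')) * V) w
        + hsmult (1 - tt) (circz (Suc (k + p')) (Suc l') * qsh V w))" by (intro lin_op_intros)
    fix u assume "u \<in> Poly_Mapping.keys w"
    with assms(4) have "u \<noteq> [] \<and> last u = Y" by (auto simp: Hy_def)
    then have "Y \<in> set u" by (metis last_in_set)
    then obtain n A where nA: "wd u = z (Suc n) * wd A" using wd_decomp by blast
    show "qsh (z (Suc (k + p')) * V) (gamma (z (Suc l')) * wd u)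
        = z (Suc (k + p')) * qsh V (gamma (z (Suc l')) * wd u) + gamma (z (Suc l')) * qsh (z (Suc (k + p')) * V) (wd u)
        + hsmult (1 - tt) (circz (Suc (k + p')) (Suc l') * qsh V (wd u))"
      unfolding nA by (rule part3_z)
  qed
qed

theorem lemma2p2:
  shows "(\<forall>k l v w. 1 \<le> k \<longrightarrow> 1 \<le> l \<longrightarrow> v \<in> Hy \<longrightarrow> w \<in> H1 \<longrightarrow>
            qsh (cat (gamma (z k)) v) (cat (z l) w)
          = cat (gamma (z k)) (qsh v (cat (z l) w))
            + cat (z l) (qsh (cat (gamma (z k)) v) w)
            + hsmult (1 - tt) (cat (circz k l) (qsh v w)))
    \<and> (\<forall>k l v w. 1 \<le> k \<longrightarrow> 1 \<le> l \<longrightarrow> v \<in> H1 \<longrightarrow> w \<in> H1 \<longrightarrow>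
            qsh (S (cat (z k) v)) (cat (z l) w)
          = cat (gamma (z k)) (qsh (S v) (cat (z l) w))
            + cat (z l) (qsh (S (cat (z k) v)) w)
            + hsmult (1 - tt) (cat (circz k l) (qsh (S v) w)))
    \<and> (\<forall>k l p V v w. 1 \<le> l \<longrightarrow> 1 \<le> p \<longrightarrow> V \<in> H1 \<longrightarrow> v = cat (z p) V \<longrightarrow> w \<in> Hy \<longrightarrow>
            qsh (cat (xpow k) v) (cat (gamma (z l)) w)
          = cat (z (k + p)) (qsh V (cat (gamma (z l)) w))
            + cat (gamma (z l)) (qsh (cat (xpow k) v) w)
            + hsmult (1 - tt) (cat (circz (k + p) l) (qsh V w)))"
  using part1 part2 part3 by blast

end
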